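(* For all $\theta,\theta'\in\Theta$, $$\|\pi^\rho_\theta\,d\lambda-\pi^\rho_{\theta'}\,d\lambda\|_{TV}\le 2(d-1)\sum_{i=1}^d\Big|1-\frac{\rho(\theta'(i))}{\rho(\theta(i))}\Big|.$$
   Context: Let $\mathsf X\subset\mathbb R^D$ be measurable, $\lambda$ a nonnegative reference measure, $\pi$ a probability density on $\mathsf X$ w.r.t. $\lambda$. $\mathsf X=\bigcup_{i=1}^d\mathsf X_i$ is a partition into disjoint measurable strata, $\theta_\star(i)=\int_{\mathsf X_i}\pi\,d\lambda$ (assumed positive), $\Theta=\{\theta\in(0,1)^d:\sum_i\theta(i)=1\}$. For a measurable $\rho:(0,1)\to(0,\infty)$ and $\theta\in\Theta$, $\pi^\rho_\theta(x)=(Z^\rho_\theta)^{-1}\sum_{i}\frac{\pi(x)}{\rho(\theta(i))}\mathbf 1_{\mathsf X_i}(x)$ with $Z^\rho_\theta=\sum_i\frac{\theta_\star(i)}{\rho(\theta(i))}$. For a signed measure $\nu$, $\|\nu\|_{TV}=\sup\{|\nu(f)|: f \text{ measurable},\ \sup_{\mathsf X}|f|\le1\}$. *)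

theory Defs
  imports "HOL-Analysis.Analysis"
begin

definition theta_star :: "'a measure \<Rightarrow> ('a \<Rightarrow> real) \<Rightarrow> (nat \<Rightarrow> 'a set) \<Rightarrow> nat \<Rightarrow> real" where
  "theta_star lam p S i = set_lebesgue_integral lam (S i) p"

definition Theta :: "nat \<Rightarrow> (nat \<Rightarrow> real) set" where
  "Theta d = {\<theta>. (\<forall>i\<in>{1..d}. 0 < \<theta> i \<and> \<theta> i < 1) \<and> (\<Sum>i=1..d. \<theta> i) = 1}"

definition Z_rho :: "'a measure \<Rightarrow> ('a \<Rightarrow> real) \<Rightarrow> (nat \<Rightarrow> 'a set) \<Rightarrow> nat
    \<Rightarrow> (real \<Rightarrow> real) \<Rightarrow> (nat \<Rightarrow> real) \<Rightarrow> real" where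
  "Z_rho lam p S d \<rho> \<theta> = (\<Sum>i=1..d. theta_star lam p S i / \<rho> (\<theta> i))"

definition pi_rho :: "'a measure \<Rightarrow> ('a \<Rightarrow> real) \<Rightarrow> (nat \<Rightarrow> 'a set) \<Rightarrow> nat
    \<Rightarrow> (real \<Rightarrow> real) \<Rightarrow> (nat \<Rightarrow> real) \<Rightarrow> 'a \<Rightarrow> real" where
  "pi_rho lam p S d \<rho> \<theta> x =
     inverse (Z_rho lam p S d \<rho> \<theta>) * (\<Sum>i=1..d. p x / \<rho> (\<theta> i) * indicator (S i) x)"

text \<open>Total variation norm of the signed measure (q1 d lam - q2 d lam):
  sup of |nu(f)| over measurable f with sup |f| <= 1.\<close>
definition tv_norm_diff :: "'a measure \<Rightarrow> ('a \<Rightarrow> real) \<Rightarrow> ('a \<Rightarrow> real) \<Rightarrow> real" where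
  "tv_norm_diff lam q1 q2 =
     (SUP f \<in> {f. f \<in> borel_measurable lam \<and> (\<forall>x\<in>space lam. \<bar>f x\<bar> \<le> 1)}.
        \<bar>(\<integral>x. f x * q1 x \<partial>lam) - (\<integral>x. f x * q2 x \<partial>lam)\<bar>)"

end

theory Submission
  imports Defs
begin

lemma xy_lem:
  fixes x y :: real assumes "0 < y" "y \<le> x"
  shows "x - y \<le> x * (\<bar>1 - x\<bar> + \<bar>1 - y\<bar>)"
proof (cases "x \<le> 1")
  case True
  then have "x - y \<le> x * (1 - y)" using assms by (simp add: algebra_simps mult_left_le)
  also have "\<dots> \<le> x * (\<bar>1 - x\<bar> + \<bar>1 - y\<bar>)" using assms by (intro mult_left_mono) auto
  finally show ?thesis .
next
  case False
  then have "x - y \<le> (x - 1) + \<bar>1 - y\<bar>" by auto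
  also have "\<dots> \<le> x * (\<bar>1 - x\<bar> + \<bar>1 - y\<bar>)" using False
    by (smt (verit, best) mult_le_cancel_right1 abs_ge_zero distrib_left)
  finally show ?thesis .
qed

lemma pair_lem:
  fixes ai aj ri rj si sj Z Z' :: real
  assumes pos: "0 < ai" "0 < aj" "0 < ri" "0 < rj" "0 < si" "0 < sj"
    and b: "ai / ri \<le> Z" "aj / rj \<le> Z" "ai / si \<le> Z'" "aj / sj \<le> Z'"
  shows "\<bar>ai * aj / (Z * Z') * (1 / (ri * sj) - 1 / (si * rj))\<bar>
         \<le> \<bar>1 - si / ri\<bar> + \<bar>1 - sj / rj\<bar>"
proof -
  define x where "x = si / ri"
  define y where "y = sj / rj"
  define P where "P = (ai / ri) * (aj / sj)"
  define Q where "Q = (aj / rj) * (ai / si)"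
  have xp: "x > 0" "y > 0" using pos by (auto simp: x_def y_def)
  have Zp: "Z > 0" "Z' > 0" using b pos by (smt (verit) divide_pos_pos)+
  have PQ: "P * y = Q * x" using pos by (simp add: P_def Q_def x_def y_def field_simps)
  have PZ1: "P \<le> Z * Z'" unfolding P_def
    by (rule mult_mono) (use b pos Zp in simp_all)
  have PZ2: "Q \<le> Z * Z'" unfolding Q_def
    by (rule mult_mono) (use b pos Zp in simp_all)
  note PZ = PZ1 PZ2
  have Pp: "P > 0" "Q > 0" using pos by (auto simp: P_def Q_def)
  have eq: "ai * aj / (Z * Z') * (1 / (ri * sj) - 1 / (si * rj)) = (P - Q) / (Z * Z')"
    using pos by (simp add: P_def Q_def field_simps)
  have "\<bar>P - Q\<bar> \<le> Z * Z' * (\<bar>1 - x\<bar> + \<bar>1 - y\<bar>)"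
  proof (cases "y \<le> x")
    case True
    have "P - Q = P * (x - y) / x" using PQ xp by (simp add: field_simps)
    moreover have "x - y \<le> x * (\<bar>1 - x\<bar> + \<bar>1 - y\<bar>)" using xy_lem[OF xp(2) True] .
    ultimately have "(x - y) / x \<le> \<bar>1 - x\<bar> + \<bar>1 - y\<bar>" using xp
      by (simp add: divide_le_eq mult.commute)
    then have "P * ((x - y) / x) \<le> P * (\<bar>1 - x\<bar> + \<bar>1 - y\<bar>)" using Pp
      by (intro mult_left_mono) auto
    then have "P - Q \<le> P * (\<bar>1 - x\<bar> + \<bar>1 - y\<bar>)" using \<open>P - Q = P * (x - y) / x\<close> by simp
    moreover have "P * (\<bar>1 - x\<bar> + \<bar>1 - y\<bar>) \<le> Z * Z' * (\<bar>1 - x\<bar> + \<bar>1 - y\<bar>)"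
      using PZ by (intro mult_right_mono) auto
    moreover have "P - Q \<ge> 0" using \<open>P - Q = P * (x - y) / x\<close> True xp Pp by simp
    ultimately show ?thesis by simp
  next
    case False
    have "Q - P = Q * (y - x) / y" using PQ xp by (simp add: field_simps)
    moreover have "y - x \<le> y * (\<bar>1 - y\<bar> + \<bar>1 - x\<bar>)" using xy_lem[OF xp(1)] False by simp
    ultimately have "(y - x) / y \<le> \<bar>1 - x\<bar> + \<bar>1 - y\<bar>" using xp
      by (simp add: divide_le_eq mult.commute add.commute)
    then have "Q * ((y - x) / y) \<le> Q * (\<bar>1 - x\<bar> + \<bar>1 - y\<bar>)" using Pp
      by (intro mult_left_mono) auto
    then have "Q - P \<le> Q * (\<bar>1 - x\<bar> + \<bar>1 - y\<bar>)" using \<open>Q - P = Q * (y - x) / y\<close> by simp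
    moreover have "Q * (\<bar>1 - x\<bar> + \<bar>1 - y\<bar>) \<le> Z * Z' * (\<bar>1 - x\<bar> + \<bar>1 - y\<bar>)"
      using PZ by (intro mult_right_mono) auto
    moreover have "Q - P \<ge> 0" using \<open>Q - P = Q * (y - x) / y\<close> False xp Pp by simp
    ultimately show ?thesis by simp
  qed
  then show ?thesis unfolding eq x_def[symmetric] y_def[symmetric] using Zp
    by (simp add: divide_le_eq abs_divide mult.commute)
qed

lemma sum_lem:
  fixes a r s :: "nat \<Rightarrow> real" and I :: "nat set"
  assumes fin: "finite I" and pos: "\<And>i. i \<in> I \<Longrightarrow> 0 < a i \<and> 0 < r i \<and> 0 < s i"
  defines "Z \<equiv> (\<Sum>j\<in>I. a j / r j)" and "Z' \<equiv> (\<Sum>j\<in>I. a j / s j)"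
  shows "(\<Sum>i\<in>I. a i * \<bar>inverse Z / r i - inverse Z' / s i\<bar>)
     \<le> 2 * (real (card I) - 1) * (\<Sum>i\<in>I. \<bar>1 - s i / r i\<bar>)"
proof -
  define E where "E i = \<bar>1 - s i / r i\<bar>" for i
  define D where "D i j = a i * a j / (Z * Z') * (1 / (r i * s j) - 1 / (s i * r j))" for i j
  have bZ: "a i / r i \<le> Z" "a i / s i \<le> Z'" if "i \<in> I" for i
    unfolding Z_def Z'_def using that pos fin
    by (auto intro!: member_le_sum simp: less_imp_le)
  have Zp: "Z > 0" "Z' > 0" if "i \<in> I" for i using bZ[OF that] pos[OF that]
    by (smt (verit) divide_pos_pos)+
  have DE: "\<bar>D i j\<bar> \<le> E i + E j" if "i \<in> I" "j \<in> I" for i j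
    unfolding D_def E_def using pair_lem pos[OF that(1)] pos[OF that(2)] bZ[OF that(1)] bZ[OF that(2)]
    by blast
  have Dii: "D i i = 0" for i by (simp add: D_def mult.commute)
  have rowsum: "a i * (inverse Z / r i - inverse Z' / s i) = (\<Sum>j\<in>I. D i j)" if i: "i \<in> I" for i
  proof -
    have "(\<Sum>j\<in>I. D i j) = (\<Sum>j\<in>I. (a i / (Z * Z' * r i)) * (a j / s j) - (a i / (Z * Z' * s i)) * (a j / r j))"
      by (rule sum.cong) (use pos i Zp[OF i] in \<open>auto simp: D_def field_simps\<close>)
    also have "\<dots> = (a i / (Z * Z' * r i)) * Z' - (a i / (Z * Z' * s i)) * Z"
      by (simp add: sum_subtractf sum_distrib_left Z_def Z'_def)
    also have "\<dots> = a i * (inverse Z / r i - inverse Z' / s i)"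
      using Zp[OF i] pos[OF i] by (simp add: field_simps)
    finally show ?thesis by simp
  qed
  have row: "a i * \<bar>inverse Z / r i - inverse Z' / s i\<bar> \<le> (real (card I) - 1) * E i + ((\<Sum>j\<in>I. E j) - E i)"
    if i: "i \<in> I" for i
  proof -
    have "a i * \<bar>inverse Z / r i - inverse Z' / s i\<bar> = \<bar>\<Sum>j\<in>I. D i j\<bar>"
      using rowsum[OF i] pos[OF i] by (metis abs_mult abs_of_pos)
    also have "\<dots> \<le> (\<Sum>j\<in>I. \<bar>D i j\<bar>)" by (rule sum_abs)
    also have "\<dots> = (\<Sum>j\<in>I - {i}. \<bar>D i j\<bar>)"
      using fin i Dii by (simp add: sum.remove)
    also have "\<dots> \<le> (\<Sum>j\<in>I - {i}. E i + E j)" by (rule sum_mono) (use DE i in auto)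
    also have "\<dots> = real (card (I - {i})) * E i + (\<Sum>j\<in>I - {i}. E j)"
      by (simp add: sum.distrib)
    also have "\<dots> = (real (card I) - 1) * E i + ((\<Sum>j\<in>I. E j) - E i)"
    proof -
      have "card I \<ge> 1" using fin i by (metis card_0_eq empty_iff less_one not_le)
      then have "real (card (I - {i})) = real (card I) - 1" using fin i by (simp add: of_nat_diff)
      moreover have "(\<Sum>j\<in>I - {i}. E j) = (\<Sum>j\<in>I. E j) - E i" using fin i by (simp add: sum_diff1)
      ultimately show ?thesis by simp
    qed
    finally show ?thesis .
  qed
  have "(\<Sum>i\<in>I. a i * \<bar>inverse Z / r i - inverse Z' / s i\<bar>)
      \<le> (\<Sum>i\<in>I. (real (card I) - 1) * E i + ((\<Sum>j\<in>I. E j) - E i))"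
    by (rule sum_mono) (rule row)
  also have "\<dots> = 2 * (real (card I) - 1) * (\<Sum>i\<in>I. E i)"
    by (simp add: sum.distrib sum_subtractf sum_distrib_left sum_distrib_right[symmetric] algebra_simps)
  finally show ?thesis unfolding E_def .
qed

theorem lemma6p2:
  fixes X :: "'a::euclidean_space set"
    and lam :: "'a measure"
    and p :: "'a \<Rightarrow> real"
    and S :: "nat \<Rightarrow> 'a set"
    and d :: nat
    and \<rho> :: "real \<Rightarrow> real"
    and \<theta> \<theta>' :: "nat \<Rightarrow> real"
  assumes X_meas: "X \<in> sets borel"
    and lam_space: "space lam = X"
    and lam_sets: "sets lam = sets (restrict_space borel X)"
    and p_meas: "p \<in> borel_measurable lam"
    and p_nonneg: "\<forall>x\<in>X. 0 \<le> p x"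
    and p_prob: "(\<integral>\<^sup>+ x. ennreal (p x) \<partial>lam) = 1"
    and S_meas: "\<forall>i\<in>{1..d}. S i \<in> sets lam"
    and S_disj: "\<forall>i\<in>{1..d}. \<forall>j\<in>{1..d}. i \<noteq> j \<longrightarrow> S i \<inter> S j = {}"
    and S_cover: "(\<Union>i\<in>{1..d}. S i) = X"
    and theta_star_pos: "\<forall>i\<in>{1..d}. 0 < theta_star lam p S i"
    and rho_meas: "\<rho> \<in> borel_measurable (restrict_space borel {0<..<1})"
    and rho_pos: "\<forall>t\<in>{0<..<1}. 0 < \<rho> t"
    and theta: "\<theta> \<in> Theta d"
    and theta': "\<theta>' \<in> Theta d"
  shows "tv_norm_diff lam (pi_rho lam p S d \<rho> \<theta>) (pi_rho lam p S d \<rho> \<theta>')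
           \<le> 2 * (real d - 1) * (\<Sum>i=1..d. \<bar>1 - \<rho> (\<theta>' i) / \<rho> (\<theta> i)\<bar>)"
proof -
  define I where "I = {1..d}"
  define a where "a i = theta_star lam p S i" for i
  define r where "r i = \<rho> (\<theta> i)" for i
  define s where "s i = \<rho> (\<theta>' i)" for i
  define Z where "Z = (\<Sum>j\<in>I. a j / r j)"
  define Z' where "Z' = (\<Sum>j\<in>I. a j / s j)"
  define c where "c i = inverse Z / r i" for i
  define c' where "c' i = inverse Z' / s i" for i
  have fin: "finite I" by (simp add: I_def)
  have pos: "0 < a i \<and> 0 < r i \<and> 0 < s i" if "i \<in> I" for i
    using that theta theta' theta_star_pos rho_pos
    by (auto simp: I_def a_def r_def s_def Theta_def)
  have pint: "integrable lam p"
    by (rule integrableI_nonneg) (use p_meas p_nonneg p_prob lam_space in auto)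
  have Smeas: "S i \<in> sets lam" if "i \<in> I" for i using S_meas that by (auto simp: I_def)
  have a_eq: "a i = (\<integral>x. p x * indicator (S i) x \<partial>lam)" for i
    by (simp add: a_def theta_star_def set_lebesgue_integral_def mult.commute)
  have pi1: "pi_rho lam p S d \<rho> \<theta> x = (\<Sum>i\<in>I. c i * (p x * indicator (S i) x))" for x
    unfolding pi_rho_def Z_rho_def c_def Z_def I_def a_def r_def
    by (simp add: sum_distrib_left)
  have pi2: "pi_rho lam p S d \<rho> \<theta>' x = (\<Sum>i\<in>I. c' i * (p x * indicator (S i) x))" for x
    unfolding pi_rho_def Z_rho_def c'_def Z'_def I_def a_def s_def
    by (simp add: sum_distrib_left)
  have main: "\<bar>(\<integral>x. f x * pi_rho lam p S d \<rho> \<theta> x \<partial>lam) - (\<integral>x. f x * pi_rho lam p S d \<rho> \<theta>' x \<partial>lam)\<bar>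
      \<le> (\<Sum>i\<in>I. a i * \<bar>c i - c' i\<bar>)"
    if fm: "f \<in> borel_measurable lam" and fb: "\<forall>x\<in>space lam. \<bar>f x\<bar> \<le> 1" for f
  proof -
    define g where "g i x = f x * (p x * indicator (S i) x)" for i x
    have gint: "integrable lam (g i)" if i: "i \<in> I" for i
    proof (rule Bochner_Integration.integrable_bound[OF pint])
      show "g i \<in> borel_measurable lam" unfolding g_def
        using fm p_meas Smeas[OF i] by measurable
      show "AE x in lam. norm (g i x) \<le> norm (p x)"
        using fb p_nonneg lam_space
        by (auto simp: g_def abs_mult indicator_def intro!: mult_left_le_one_le)
    qed
    have pSint: "integrable lam (\<lambda>x. p x * indicator (S i) x)" if i: "i \<in> I" for i
      using Smeas[OF i] pint by (rule integrable_real_mult_indicator)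
    have gb: "\<bar>\<integral>x. g i x \<partial>lam\<bar> \<le> a i" if i: "i \<in> I" for i
    proof -
      have "\<bar>\<integral>x. g i x \<partial>lam\<bar> \<le> (\<integral>x. \<bar>g i x\<bar> \<partial>lam)" by (rule integral_abs_bound)
      also have "\<dots> \<le> (\<integral>x. p x * indicator (S i) x \<partial>lam)"
        using fb p_nonneg lam_space
        by (intro integral_mono[OF integrable_abs[OF gint[OF i]] pSint[OF i]]) (auto simp: g_def abs_mult indicator_def intro!: mult_left_le_one_le)
      finally show ?thesis by (simp add: a_eq)
    qed
    have e1: "(\<integral>x. f x * pi_rho lam p S d \<rho> \<theta> x \<partial>lam) = (\<Sum>i\<in>I. c i * (\<integral>x. g i x \<partial>lam))"
    proof -
      have "(\<integral>x. f x * pi_rho lam p S d \<rho> \<theta> x \<partial>lam) = (\<integral>x. (\<Sum>i\<in>I. c i * g i x) \<partial>lam)"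
        by (simp add: pi1 g_def sum_distrib_left algebra_simps)
      also have "\<dots> = (\<Sum>i\<in>I. (\<integral>x. c i * g i x \<partial>lam))"
        by (rule Bochner_Integration.integral_sum[where M=lam and I=I and f="\<lambda>i x. c i * g i x"]) (use gint in auto)
      finally show ?thesis by simp
    qed
    have e2: "(\<integral>x. f x * pi_rho lam p S d \<rho> \<theta>' x \<partial>lam) = (\<Sum>i\<in>I. c' i * (\<integral>x. g i x \<partial>lam))"
    proof -
      have "(\<integral>x. f x * pi_rho lam p S d \<rho> \<theta>' x \<partial>lam) = (\<integral>x. (\<Sum>i\<in>I. c' i * g i x) \<partial>lam)"
        by (simp add: pi2 g_def sum_distrib_left algebra_simps)
      also have "\<dots> = (\<Sum>i\<in>I. (\<integral>x. c' i * g i x \<partial>lam))"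
        by (rule Bochner_Integration.integral_sum[where M=lam and I=I and f="\<lambda>i x. c' i * g i x"]) (use gint in auto)
      finally show ?thesis by simp
    qed
    have "\<bar>(\<Sum>i\<in>I. c i * (\<integral>x. g i x \<partial>lam)) - (\<Sum>i\<in>I. c' i * (\<integral>x. g i x \<partial>lam))\<bar>
        = \<bar>\<Sum>i\<in>I. (c i - c' i) * (\<integral>x. g i x \<partial>lam)\<bar>"
      by (simp add: sum_subtractf algebra_simps)
    also have "\<dots> \<le> (\<Sum>i\<in>I. \<bar>(c i - c' i) * (\<integral>x. g i x \<partial>lam)\<bar>)" by (rule sum_abs)
    also have "\<dots> \<le> (\<Sum>i\<in>I. a i * \<bar>c i - c' i\<bar>)"
      by (rule sum_mono) (use gb in \<open>auto simp: abs_mult mult.commute intro!: mult_right_mono\<close>)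
    finally show ?thesis using e1 e2 by simp
  qed
  have "tv_norm_diff lam (pi_rho lam p S d \<rho> \<theta>) (pi_rho lam p S d \<rho> \<theta>') \<le> (\<Sum>i\<in>I. a i * \<bar>c i - c' i\<bar>)"
    unfolding tv_norm_diff_def
  proof (rule cSUP_least)
    show "{f :: 'a \<Rightarrow> real. f \<in> borel_measurable lam \<and> (\<forall>x\<in>space lam. \<bar>f x\<bar> \<le> 1)} \<noteq> {}"
    proof -
      have "(\<lambda>_. 0::real) \<in> {f. f \<in> borel_measurable lam \<and> (\<forall>x\<in>space lam. \<bar>f x\<bar> \<le> 1)}" by simp
      then show ?thesis by (metis empty_iff)
    qed
  next
    fix f :: "'a \<Rightarrow> real" assume "f \<in> {f. f \<in> borel_measurable lam \<and> (\<forall>x\<in>space lam. \<bar>f x\<bar> \<le> 1)}"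
    then show "\<bar>(\<integral>x. f x * pi_rho lam p S d \<rho> \<theta> x \<partial>lam) - (\<integral>x. f x * pi_rho lam p S d \<rho> \<theta>' x \<partial>lam)\<bar>
      \<le> (\<Sum>i\<in>I. a i * \<bar>c i - c' i\<bar>)" using main[of f] by simp
  qed
  also have "\<dots> \<le> 2 * (real (card I) - 1) * (\<Sum>i\<in>I. \<bar>1 - s i / r i\<bar>)"
    unfolding c_def c'_def Z_def Z'_def by (rule sum_lem[OF fin pos])
  finally show ?thesis by (simp add: I_def r_def s_def)
qed

end
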